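(* For every $t\in I$, $\tau\in(0,T-t]$ and $x\in\mathbb{R}^n$, $$V(t,x)=\mathcal{E}\big(\mathrm{cl}\,\widetilde Y(\tau,t,x),P\big),\qquad \widetilde Y(\tau,t,x)=\bigcup_{u\in\mathcal{U}}\Big(J(t,t+\tau,x,u)+V\big(t+\tau,x(t+\tau;t,x,u)\big)\Big).$$
   Context: Setting (MOC). Fix $T>0$, $I=[0,T]$, integers $n,m,p\ge1$, nonempty compact $U\subset\mathbb{R}^m$. $f:\mathbb{R}^n\times U\to\mathbb{R}^n$ continuous with $\|f(x_1,u)-f(x_2,u)\|\le K_f\|x_1-x_2\|$, $\|f(x,u)\|\le M_f$. $L:\mathbb{R}^n\times U\to\mathbb{R}^p$ continuous with $\|L(x,u)\|\le M_L$, $\|L(x_1,u)-L(x_2,u)\|\le K_L\|x_1-x_2\|$. Controls $\mathcal{U}$: bounded Lebesgue measurable $u:I\to U$. $x(s;t,x,u)$ solves $\dot x=f(x,u(s))$ on $[t,T]$, $x(t)=x$; $J(t,t',x,u)=\int_t^{t'}L(x(s;t,x,u),u(s))ds$; $Y(t,x)=\{J(t,T,x,u):u\in\mathcal{U}\}$. $P\subset\mathbb{R}^p$: closed convex pointed cone containing $0$ with nonempty interior; $\mathcal{E}(S,P)=\{y\in S:(y-P)\cap S=\{y\}\}$; $V(t,x)=\mathcal{E}(\mathrm{cl}\,Y(t,x),P)$ (so $V(T,x)=\{0\}$). *)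

theory Defs
  imports "HOL-Analysis.Analysis"
begin

definition admissible_controls :: "real \<Rightarrow> 'c::euclidean_space set \<Rightarrow> (real \<Rightarrow> 'c) set" where
  "admissible_controls T U =
     {u. (\<forall>s\<in>{0..T}. u s \<in> U) \<and> u measurable_on {0..T} \<and> bounded (u ` {0..T})}"

text \<open>y is a (Caratheodory) solution of y' = f(y, u(s)) on [t,T] with y(t) = x,
  i.e. it is continuous and satisfies the integral equation.\<close>
definition is_traj :: "('a::euclidean_space \<Rightarrow> 'c \<Rightarrow> 'a) \<Rightarrow> real \<Rightarrow> real \<Rightarrow> 'a
     \<Rightarrow> (real \<Rightarrow> 'c) \<Rightarrow> (real \<Rightarrow> 'a) \<Rightarrow> bool" where
  "is_traj f T t x u y \<longleftrightarrow> continuous_on {t..T} y \<and>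
     (\<forall>s\<in>{t..T}. (\<lambda>r. f (y r) (u r)) integrable_on {t..s} \<and>
                 y s = x + integral {t..s} (\<lambda>r. f (y r) (u r)))"

text \<open>Cost J(t,t',x,u) along the trajectory y = x(.;t,x,u).\<close>
definition cost :: "('a \<Rightarrow> 'c \<Rightarrow> 'b::euclidean_space) \<Rightarrow> real \<Rightarrow> real
     \<Rightarrow> (real \<Rightarrow> 'a) \<Rightarrow> (real \<Rightarrow> 'c) \<Rightarrow> 'b" where
  "cost L t t' y u = integral {t..t'} (\<lambda>s. L (y s) (u s))"

definition Yset :: "('a::euclidean_space \<Rightarrow> 'c::euclidean_space \<Rightarrow> 'a) \<Rightarrow> ('a \<Rightarrow> 'c \<Rightarrow> 'b::euclidean_space)
     \<Rightarrow> 'c set \<Rightarrow> real \<Rightarrow> real \<Rightarrow> 'a \<Rightarrow> 'b set" where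
  "Yset f L U T t x = {cost L t T y u | u y. u \<in> admissible_controls T U \<and> is_traj f T t x u y}"

definition efficient :: "'b::real_vector set \<Rightarrow> 'b set \<Rightarrow> 'b set" where
  "efficient S P = {y \<in> S. ((\<lambda>p. y - p) ` P) \<inter> S = {y}}"

definition Vfun :: "('a::euclidean_space \<Rightarrow> 'c::euclidean_space \<Rightarrow> 'a) \<Rightarrow> ('a \<Rightarrow> 'c \<Rightarrow> 'b::euclidean_space)
     \<Rightarrow> 'c set \<Rightarrow> real \<Rightarrow> 'b set \<Rightarrow> real \<Rightarrow> 'a \<Rightarrow> 'b set" where
  "Vfun f L U T P t x = efficient (closure (Yset f L U T t x)) P"

definition Ytilde :: "('a::euclidean_space \<Rightarrow> 'c::euclidean_space \<Rightarrow> 'a) \<Rightarrow> ('a \<Rightarrow> 'c \<Rightarrow> 'b::euclidean_space)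
     \<Rightarrow> 'c set \<Rightarrow> real \<Rightarrow> 'b set \<Rightarrow> real \<Rightarrow> real \<Rightarrow> 'a \<Rightarrow> 'b set" where
  "Ytilde f L U T P \<tau> t x =
     \<Union> {(\<lambda>v. cost L t (t + \<tau>) y u + v) ` Vfun f L U T P (t + \<tau>) (y (t + \<tau>)) | u y.
          u \<in> admissible_controls T U \<and> is_traj f T t x u y}"

end

theory Submission
  imports Defs
begin


lemma cone_add:
  fixes P :: "'b::real_vector set"
  assumes "convex P" "cone P" "p \<in> P" "q \<in> P" shows "p + q \<in> P"
  using assms convex_cone by blast

lemma finite_chain_min:
  fixes P :: "'b::real_vector set"
  assumes "finite C" "C \<noteq> {}"
    and ch: "\<And>a b. a \<in> C \<Longrightarrow> b \<in> C \<Longrightarrow> a - b \<in> P \<or> b - a \<in> P"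
    and add: "\<And>p q. p \<in> P \<Longrightarrow> q \<in> P \<Longrightarrow> p + q \<in> P" and z: "0 \<in> P"
  shows "\<exists>m\<in>C. \<forall>c\<in>C. c - m \<in> P"
  using assms(1,2) ch
proof (induction C rule: finite_ne_induct)
  case (singleton x) then show ?case using z by auto
next
  case (insert x F)
  then obtain m where m: "m \<in> F" "\<forall>c\<in>F. c - m \<in> P" by blast
  have "x - m \<in> P \<or> m - x \<in> P" using insert.prems m(1) by blast
  then show ?case
  proof
    assume "x - m \<in> P" then show ?thesis using m z by auto
  next
    assume h: "m - x \<in> P"
    have "\<forall>c\<in>insert x F. c - x \<in> P"
    proof
      fix c assume "c \<in> insert x F"
      then show "c - x \<in> P"
      proof
        assume "c = x" then show ?thesis using z by simp
      next
        assume "c \<in> F"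
        then have "(c - m) + (m - x) \<in> P" using m h add by blast
        then show ?thesis by simp
      qed
    qed
    then show ?thesis by blast
  qed
qed

lemma dominate:
  fixes A P :: "'b::euclidean_space set"
  assumes A: "compact A" and Pc: "closed P" and add: "\<And>p q. p \<in> P \<Longrightarrow> q \<in> P \<Longrightarrow> p + q \<in> P"
    and pt: "P \<inter> uminus ` P = {0}" and z: "0 \<in> P" and aA: "a \<in> A"
  shows "\<exists>m \<in> efficient A P. a - m \<in> P"
proof -
  define A' where "A' = A \<inter> {z. a - z \<in> P}"
  have clz: "closed {z. w - z \<in> P}" for w
  proof -
    have "closed ((\<lambda>z. w - z) -` P)"
      by (rule continuous_closed_vimage[OF Pc]) (intro continuous_intros)
    then show ?thesis by (simp add: vimage_def)
  qed
  have cA': "compact A'" unfolding A'_def using A clz compact_Int_closed by blast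
  define R where "R = (\<lambda>z w. z - w \<in> (P::'b set))"
  have antis: "p \<in> P \<Longrightarrow> - p \<in> P \<Longrightarrow> p = 0" for p
  proof -
    assume "p \<in> P" "- p \<in> P"
    then have "p \<in> P \<inter> uminus ` P" by (metis IntI image_eqI minus_minus)
    then show "p = 0" using pt by blast
  qed
  have po: "partial_order_on A' (relation_of R A')"
    unfolding partial_order_on_def preorder_on_def refl_on_def trans_on_def antisym_on_def relation_of_def R_def
  proof (intro conjI ballI impI allI)
    show "{(a, b). (a, b) \<in> A' \<times> A' \<and> a - b \<in> P} \<subseteq> A' \<times> A'" by auto
    show "x \<in> A' \<Longrightarrow> (x, x) \<in> {(a, b). (a, b) \<in> A' \<times> A' \<and> a - b \<in> P}" for x using z by auto
    fix x y w
    assume "(x, y) \<in> {(a, b). (a, b) \<in> A' \<times> A' \<and> a - b \<in> P}" "(y, w) \<in> {(a, b). (a, b) \<in> A' \<times> A' \<and> a - b \<in> P}"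
    then have h: "x - y \<in> P" "y - w \<in> P" "x \<in> A'" "w \<in> A'" by auto
    then have "(x - y) + (y - w) \<in> P" using add by blast
    then have "x - w \<in> P" by simp
    with h
    show "(x, w) \<in> {(a, b). (a, b) \<in> A' \<times> A' \<and> a - b \<in> P}" by simp
  next
    fix x y
    assume "(x, y) \<in> {(a, b). (a, b) \<in> A' \<times> A' \<and> a - b \<in> P}" "(y, x) \<in> {(a, b). (a, b) \<in> A' \<times> A' \<and> a - b \<in> P}"
    then have "x - y \<in> P" "- (x - y) \<in> P" by auto
    then show "x = y" using antis by fastforce
  qed
  have aA': "a \<in> A'" using aA z unfolding A'_def by auto
  have ch: "\<exists>u \<in> A'. \<forall>c \<in> C. R c u" if C: "C \<in> Chains (relation_of R A')" for C
  proof (cases "C = {}")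
    case True then show ?thesis using aA' by auto
  next
    case False
    have CA: "C \<subseteq> A'" using C unfolding Chains_def relation_of_def by auto
    have chC: "c - d \<in> P \<or> d - c \<in> P" if "c \<in> C" "d \<in> C" for c d
      using C that unfolding Chains_def relation_of_def R_def by auto
    have "A' \<inter> \<Inter> ((\<lambda>c. {z. c - z \<in> P}) ` C) \<noteq> {}"
    proof (rule compact_imp_fip[OF cA'])
      show "closed T" if "T \<in> (\<lambda>c. {z. c - z \<in> P}) ` C" for T using that clz by auto
      fix F' assume F': "finite F'" "F' \<subseteq> (\<lambda>c. {z. c - z \<in> P}) ` C"
      then obtain C' where C': "C' \<subseteq> C" "finite C'" "F' = (\<lambda>c. {z. c - z \<in> P}) ` C'"
        by (meson finite_subset_image)
      show "A' \<inter> \<Inter> F' \<noteq> {}"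
      proof (cases "C' = {}")
        case True then show ?thesis using C' aA' by auto
      next
        case False
        then obtain m where m: "m \<in> C'" "\<forall>c\<in>C'. c - m \<in> P"
          using finite_chain_min[of C' P] C' chC add z by blast
        then have "m \<in> A' \<inter> \<Inter> F'" using C' CA by auto
        then show ?thesis by blast
      qed
    qed
    then obtain u where "u \<in> A'" "\<forall>c\<in>C. c - u \<in> P" by blast
    then show ?thesis unfolding R_def by blast
  qed
  obtain m where m: "m \<in> A'" "\<forall>w \<in> A'. R m w \<longrightarrow> w = m"
    using predicate_Zorn[OF po ch] by blast
  have "m \<in> efficient A P"
    unfolding efficient_def
  proof (intro CollectI conjI)
    show "m \<in> A" using m unfolding A'_def by auto
    show "(\<lambda>p. m - p) ` P \<inter> A = {m}"
    proof
      show "{m} \<subseteq> (\<lambda>p. m - p) ` P \<inter> A" using z \<open>m \<in> A\<close> by (auto intro!: image_eqI[where x=0])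
      show "(\<lambda>p. m - p) ` P \<inter> A \<subseteq> {m}"
      proof
        fix w assume "w \<in> (\<lambda>p. m - p) ` P \<inter> A"
        then obtain p where p: "p \<in> P" "w = m - p" "w \<in> A" by auto
        have "a - m \<in> P" using m unfolding A'_def by auto
        then have "(a - m) + p \<in> P" using add p by blast
        then have "w \<in> A'" using p unfolding A'_def by (auto simp: algebra_simps)
        moreover have "R m w" using p unfolding R_def by simp
        ultimately show "w \<in> {m}" using m by auto
      qed
    qed
  qed
  moreover have "a - m \<in> P" using m unfolding A'_def by auto
  ultimately show ?thesis by blast
qed

lemma eff_eq:
  fixes A B P :: "'b::real_vector set"
  assumes BA: "B \<subseteq> A" and AB: "\<And>a. a \<in> A \<Longrightarrow> \<exists>b\<in>B. a - b \<in> P"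
    and add: "\<And>p q. p \<in> P \<Longrightarrow> q \<in> P \<Longrightarrow> p + q \<in> P"
    and pt: "P \<inter> uminus ` P = {0}" and z: "0 \<in> P"
  shows "efficient A P = efficient B P"
proof -
  have antis: "p \<in> P \<Longrightarrow> - p \<in> P \<Longrightarrow> p = 0" for p
  proof -
    assume "p \<in> P" "- p \<in> P"
    then have "p \<in> P \<inter> uminus ` P" by (metis IntI image_eqI minus_minus)
    then show "p = 0" using pt by blast
  qed
  show ?thesis
  proof
    show "efficient A P \<subseteq> efficient B P"
    proof
      fix a assume a: "a \<in> efficient A P"
      then have aA: "a \<in> A" and eq: "(\<lambda>p. a - p) ` P \<inter> A = {a}" unfolding efficient_def by auto
      obtain b where b: "b \<in> B" "a - b \<in> P" using AB aA by blast
      have "b \<in> (\<lambda>p. a - p) ` P \<inter> A" using b BA by (auto intro!: image_eqI[where x="a - b"])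
      then have "b = a" using eq by auto
      then have aB: "a \<in> B" using b by simp
      have "(\<lambda>p. a - p) ` P \<inter> B = {a}"
      proof
        show "(\<lambda>p. a - p) ` P \<inter> B \<subseteq> {a}" using eq BA by blast
        show "{a} \<subseteq> (\<lambda>p. a - p) ` P \<inter> B" using aB z by (auto intro!: image_eqI[where x=0])
      qed
      then show "a \<in> efficient B P" using aB unfolding efficient_def by auto
    qed
    show "efficient B P \<subseteq> efficient A P"
    proof
      fix b assume "b \<in> efficient B P"
      then have bB: "b \<in> B" and eq: "(\<lambda>p. b - p) ` P \<inter> B = {b}" unfolding efficient_def by auto
      have "(\<lambda>p. b - p) ` P \<inter> A \<subseteq> {b}"
      proof
        fix w assume "w \<in> (\<lambda>p. b - p) ` P \<inter> A"
        then obtain p where p: "p \<in> P" "w = b - p" "w \<in> A" by auto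
        obtain b' where b': "b' \<in> B" "w - b' \<in> P" using AB p(3) by blast
        have pp: "p + (w - b') \<in> P" using add p b' by blast
        have eqb: "b' = b - (p + (w - b'))" using p by simp
        then have "b' \<in> (\<lambda>p. b - p) ` P \<inter> B" using pp b' by blast
        then have "b' = b" using eq by auto
        then have "p + (w - b') = 0" using eqb by simp
        then have "- p = w - b'" by (metis add_diff_cancel_left' diff_0)
        then have "p = 0" using antis p(1) b'(2) by simp
        then show "w \<in> {b}" using p by simp
      qed
      moreover have "b \<in> (\<lambda>p. b - p) ` P \<inter> A" using bB BA z by (auto intro!: image_eqI[where x=0])
      ultimately show "b \<in> efficient A P" using bB BA unfolding efficient_def by auto
    qed
  qed
qed



lemma comp_integrable:
  fixes g :: "'a::euclidean_space \<times> 'c::euclidean_space \<Rightarrow> 'b::euclidean_space"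
    and a b :: real
  assumes Uc: "closed U" and gc: "continuous_on (UNIV \<times> U) g"
    and gb: "\<And>z v. v \<in> U \<Longrightarrow> norm (g (z, v)) \<le> M"
    and yc: "continuous_on {a..b} y" and um: "u measurable_on {a..b}"
    and uU: "\<And>r. r \<in> {a..b} \<Longrightarrow> u r \<in> U"
  shows "(\<lambda>r. g (y r, u r)) integrable_on {a..b}"
proof -
  have "closedin (top_of_set UNIV) (UNIV \<times> U)"
    using Uc closed_Times closed_UNIV closedin_closed_Int by (metis inf_top_left)
  then obtain h where hc: "continuous_on UNIV h" and hg: "\<And>x. x \<in> UNIV \<times> U \<Longrightarrow> h x = g x"
    using Tietze_unbounded[OF gc] by blast
  have S: "{a..b} \<in> sets lebesgue" by auto
  have ym: "y measurable_on {a..b}"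
    by (rule measurable_on_iff_borel_measurable[OF S, THEN iffD2, OF continuous_imp_measurable_on_sets_lebesgue[OF yc S]])
  have pm: "(\<lambda>r. (y r, u r)) measurable_on {a..b}"
    by (rule measurable_on_Pair[OF ym um])
  have m1: "(\<lambda>r. if r \<in> {a..b} then (y r, u r) else 0) measurable_on UNIV"
    by (rule measurable_on_UNIV[THEN iffD2, OF pm])
  have m2: "(h \<circ> (\<lambda>r. if r \<in> {a..b} then (y r, u r) else 0)) measurable_on UNIV"
    by (rule measurable_on_compose_continuous[OF m1 hc])
  have m3: "(\<lambda>r. if r \<in> {a..b} then (h \<circ> (\<lambda>r. if r \<in> {a..b} then (y r, u r) else 0)) r else 0) measurable_on UNIV"
    by (rule measurable_on_restrict[OF m2 S])
  have eq: "(\<lambda>r. if r \<in> {a..b} then (h \<circ> (\<lambda>r. if r \<in> {a..b} then (y r, u r) else 0)) r else 0)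
      = (\<lambda>r. if r \<in> {a..b} then g (y r, u r) else 0)"
    using hg uU by (auto simp: fun_eq_iff)
  have "(\<lambda>r. g (y r, u r)) measurable_on {a..b}"
    using m3 unfolding eq measurable_on_UNIV .
  then have bm: "(\<lambda>r. g (y r, u r)) \<in> borel_measurable (lebesgue_on {a..b})"
    by (rule measurable_on_iff_borel_measurable[OF S, THEN iffD1])
  show ?thesis
  proof (rule measurable_bounded_by_integrable_imp_integrable[OF bm _ _ S, where g="\<lambda>_. M"])
    show "(\<lambda>_. M) integrable_on {a..b}" by (rule integrable_const_ivl)
    fix r assume "r \<in> {a..b}"
    then have "u r \<in> U" by (rule uU)
    then show "norm (g (y r, u r)) \<le> M" by (rule gb)
  qed
qed



lemma meas_sub:
  fixes u :: "real \<Rightarrow> 'c::euclidean_space"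
  assumes "u measurable_on {a..b}" "a \<le> c"
  shows "u measurable_on {c..b}"
proof -
  have m: "(\<lambda>r. if r \<in> {a..b} then u r else 0) measurable_on UNIV"
    by (rule measurable_on_UNIV[THEN iffD2, OF assms(1)])
  have S: "{c..b} \<in> sets lebesgue" by auto
  have "(\<lambda>r. if r \<in> {c..b} then (if r \<in> {a..b} then u r else 0) else 0) measurable_on UNIV"
    by (rule measurable_on_restrict[OF m S])
  moreover have "(\<lambda>r. if r \<in> {c..b} then (if r \<in> {a..b} then u r else 0) else 0)
     = (\<lambda>r. if r \<in> {c..b} then u r else 0)" using assms(2) by (auto simp: fun_eq_iff)
  ultimately have "(\<lambda>r. if r \<in> {c..b} then u r else 0) measurable_on UNIV" by simp
  then show ?thesis by (rule measurable_on_UNIV[THEN iffD1])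
qed

lemma traj_restrict:
  assumes tr: "is_traj f T t x u y" and "t \<le> s" "s \<le> T"
  shows "is_traj f T s (y s) u y"
  unfolding is_traj_def
proof (intro conjI ballI)
  show "continuous_on {s..T} y"
    using tr assms unfolding is_traj_def by (meson atLeastatMost_subset_iff continuous_on_subset order_refl)
  fix r assume r: "r \<in> {s..T}"
  have ir: "(\<lambda>q. f (y q) (u q)) integrable_on {t..r}" and yr: "y r = x + integral {t..r} (\<lambda>q. f (y q) (u q))"
    using tr r assms unfolding is_traj_def by auto
  have ys: "y s = x + integral {t..s} (\<lambda>q. f (y q) (u q))"
    using tr assms unfolding is_traj_def by auto
  show "(\<lambda>q. f (y q) (u q)) integrable_on {s..r}"
    using integrable_on_subinterval[OF ir] assms r by auto
  have "integral {t..s} (\<lambda>q. f (y q) (u q)) + integral {s..r} (\<lambda>q. f (y q) (u q)) = integral {t..r} (\<lambda>q. f (y q) (u q))"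
    using Henstock_Kurzweil_Integration.integral_combine[OF _ _ ir, of s] assms r by auto
  then show "y r = y s + integral {s..r} (\<lambda>q. f (y q) (u q))"
    using yr ys by (simp add: algebra_simps)
qed



lemma concat_adm:
  fixes u u' :: "real \<Rightarrow> 'c::euclidean_space" and s T :: real
  assumes u: "u \<in> admissible_controls T U" and u': "u' \<in> admissible_controls T U"
  shows "(\<lambda>r. if r \<le> s then u r else u' r) \<in> admissible_controls T U"
proof -
  let ?w = "\<lambda>r. if r \<le> s then u r else u' r"
  have um: "(\<lambda>r. if r \<in> {0..T} then u r else 0) measurable_on UNIV"
    using u unfolding admissible_controls_def by (intro measurable_on_UNIV[THEN iffD2]) blast
  have um': "(\<lambda>r. if r \<in> {0..T} then u' r else 0) measurable_on UNIV"
    using u' unfolding admissible_controls_def by (intro measurable_on_UNIV[THEN iffD2]) blast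
  have i1: "indicat_real {..s} measurable_on UNIV" by (rule indicator_measurable_on) auto
  have i2: "indicat_real {s<..} measurable_on UNIV" by (rule indicator_measurable_on) auto
  have "(\<lambda>r. indicat_real {..s} r *\<^sub>R (if r \<in> {0..T} then u r else 0)
      + indicat_real {s<..} r *\<^sub>R (if r \<in> {0..T} then u' r else 0)) measurable_on UNIV"
    by (intro measurable_on_add measurable_on_scaleR i1 i2 um um')
  moreover have "(\<lambda>r. indicat_real {..s} r *\<^sub>R (if r \<in> {0..T} then u r else 0)
      + indicat_real {s<..} r *\<^sub>R (if r \<in> {0..T} then u' r else 0))
     = (\<lambda>r. if r \<in> {0..T} then ?w r else 0)"
    by (auto simp: fun_eq_iff indicator_def)
  ultimately have "(\<lambda>r. if r \<in> {0..T} then ?w r else 0) measurable_on UNIV" by simp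
  then have m: "?w measurable_on {0..T}" by (rule measurable_on_UNIV[THEN iffD1])
  have b: "bounded (?w ` {0..T})"
  proof -
    have "?w ` {0..T} \<subseteq> u ` {0..T} \<union> u' ` {0..T}" by auto
    moreover have "bounded (u ` {0..T} \<union> u' ` {0..T})"
      using u u' unfolding admissible_controls_def by auto
    ultimately show ?thesis using bounded_subset by blast
  qed
  have "\<forall>r\<in>{0..T}. ?w r \<in> U" using u u' unfolding admissible_controls_def by auto
  then show ?thesis using m b unfolding admissible_controls_def by blast
qed

lemma concat_traj:
  assumes tr: "is_traj f T t x u y" and tr': "is_traj f T s (y s) u' y'"
    and ts: "t \<le> s" "s \<le> T"
  shows "is_traj f T t x (\<lambda>r. if r \<le> s then u r else u' r) (\<lambda>r. if r \<le> s then y r else y' r)"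
proof -
  let ?u = "\<lambda>r. if r \<le> s then u r else u' r"
  let ?y = "\<lambda>r. if r \<le> s then y r else y' r"
  let ?F = "\<lambda>q. f (y q) (u q)"
  let ?F' = "\<lambda>q. f (y' q) (u' q)"
  let ?G = "\<lambda>q. f (?y q) (?u q)"
  have y's: "y' s = y s" using tr' ts unfolding is_traj_def by auto
  have ys: "y s = x + integral {t..s} ?F" and iFs: "?F integrable_on {t..s}"
    using tr ts unfolding is_traj_def by auto
  have cont: "continuous_on {t..T} ?y"
  proof (rule continuous_on_cases_le[where h="\<lambda>r. r", OF _ _ continuous_on_id])
    show "continuous_on {r \<in> {t..T}. r \<le> s} y"
      using tr unfolding is_traj_def by (rule continuous_on_subset[OF conjunct1]) auto
    show "continuous_on {r \<in> {t..T}. s \<le> r} y'"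
      using tr' unfolding is_traj_def by (rule continuous_on_subset[OF conjunct1]) auto
    show "\<And>r. r \<in> {t..T} \<Longrightarrow> r = s \<Longrightarrow> y r = y' r" using y's by simp
  qed
  show ?thesis
    unfolding is_traj_def
  proof (rule conjI[OF cont], intro ballI)
    fix r assume r: "r \<in> {t..T}"
    show "?G integrable_on {t..r} \<and> ?y r = x + integral {t..r} ?G"
    proof (cases "r \<le> s")
      case True
      have eq: "\<And>q. q \<in> {t..r} \<Longrightarrow> ?G q = ?F q" using True by auto
      have h: "?F integrable_on {t..r}" "y r = x + integral {t..r} ?F" using tr r unfolding is_traj_def by auto
      have i1: "integral {t..r} ?G = integral {t..r} ?F" by (rule integral_cong[OF eq])
      have i2: "?G integrable_on {t..r}"
        by (rule integrable_spike_finite[where S="{}" and f="?F", OF _ _ h(1)]) (use eq in auto)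
      have "?y r = y r" using True by simp
      then show ?thesis using i1 i2 h(2) by simp
    next
      case False
      have eq1: "\<And>q. q \<in> {t..s} \<Longrightarrow> ?G q = ?F q" by auto
      have eq2: "\<And>q. q \<in> {s..r} - {s} \<Longrightarrow> ?G q = ?F' q" by auto
      have r': "r \<in> {s..T}" using False r by auto
      have iF': "?F' integrable_on {s..r}" and y'r: "y' r = y' s + integral {s..r} ?F'"
        using tr' r' unfolding is_traj_def by auto
      have g1: "?G integrable_on {t..s}"
        by (rule integrable_spike_finite[where S="{}" and f="?F", OF _ _ iFs]) (use eq1 in auto)
      have g2: "?G integrable_on {s..r}"
        by (rule integrable_spike_finite[where S="{s}" and f="?F'", OF _ _ iF']) (use eq2 in auto)
      have gi: "?G integrable_on {t..r}"
        by (rule Henstock_Kurzweil_Integration.integrable_combine[OF _ _ g1 g2]) (use ts False in auto)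
      have "integral {t..r} ?G = integral {t..s} ?G + integral {s..r} ?G"
        using Henstock_Kurzweil_Integration.integral_combine[OF _ _ gi, of s] ts False by auto
      also have "integral {t..s} ?G = integral {t..s} ?F" by (rule integral_cong[OF eq1])
      also have "integral {s..r} ?G = integral {s..r} ?F'"
        by (rule integral_spike[where S="{s}"]) (use eq2 in auto)
      finally have "integral {t..r} ?G = integral {t..s} ?F + integral {s..r} ?F'" .
      then have "x + integral {t..r} ?G = y' r" using ys y'r y's by (simp add: algebra_simps)
      then show ?thesis using gi False by simp
    qed
  qed
qed

theorem proposition5p1:
  fixes f :: "'a::euclidean_space \<Rightarrow> 'c::euclidean_space \<Rightarrow> 'a"
    and L :: "'a \<Rightarrow> 'c \<Rightarrow> 'b::euclidean_space"
    and U :: "'c set" and P :: "'b set"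
    and T K_f M_f K_L M_L t \<tau> :: real and x :: 'a
  assumes T_pos: "T > 0"
    and U_compact: "compact U" and U_ne: "U \<noteq> {}"
    and f_cont: "continuous_on (UNIV \<times> U) (\<lambda>(z, v). f z v)"
    and f_lip: "\<And>x1 x2 v. v \<in> U \<Longrightarrow> norm (f x1 v - f x2 v) \<le> K_f * norm (x1 - x2)"
    and f_bnd: "\<And>z v. v \<in> U \<Longrightarrow> norm (f z v) \<le> M_f"
    and L_cont: "continuous_on (UNIV \<times> U) (\<lambda>(z, v). L z v)"
    and L_bnd: "\<And>z v. v \<in> U \<Longrightarrow> norm (L z v) \<le> M_L"
    and L_lip: "\<And>x1 x2 v. v \<in> U \<Longrightarrow> norm (L x1 v - L x2 v) \<le> K_L * norm (x1 - x2)"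
    and P_closed: "closed P" and P_convex: "convex P" and P_cone: "cone P"
    and P_pointed: "P \<inter> uminus ` P = {0}" and P_zero: "0 \<in> P"
    and P_int: "interior P \<noteq> {}"
    and t_in: "t \<in> {0..T}"
    and tau_pos: "0 < \<tau>" and tau_le: "\<tau> \<le> T - t"
  shows "Vfun f L U T P t x = efficient (closure (Ytilde f L U T P \<tau> t x)) P"
proof -
  define s where "s = t + \<tau>"
  have ts: "t \<le> s" "s \<le> T" "0 \<le> t" "0 \<le> s" using t_in tau_pos tau_le unfolding s_def by auto
  have add: "\<And>p q. p \<in> P \<Longrightarrow> q \<in> P \<Longrightarrow> p + q \<in> P" using cone_add[OF P_convex P_cone] by blast
  have Ucl: "closed U" using U_compact compact_imp_closed by blast
  let ?adm = "admissible_controls T U"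
  have Lint: "(\<lambda>r. L (y r) (u r)) integrable_on {t0..T}"
    if "0 \<le> t0" "u \<in> ?adm" "is_traj f T t0 z u y" for t0 z u y
  proof -
    have "(\<lambda>r. (\<lambda>(z, v). L z v) (y r, u r)) integrable_on {t0..T}"
    proof (rule comp_integrable[OF Ucl L_cont])
      show "\<And>z v. v \<in> U \<Longrightarrow> norm ((\<lambda>(z, v). L z v) (z, v)) \<le> M_L" using L_bnd by simp
      show "continuous_on {t0..T} y" using that unfolding is_traj_def by blast
      show "u measurable_on {t0..T}"
        using that meas_sub[of u 0 T t0] unfolding admissible_controls_def by blast
      show "\<And>r. r \<in> {t0..T} \<Longrightarrow> u r \<in> U" using that unfolding admissible_controls_def by auto
    qed
    then show ?thesis by simp
  qed
  have Ybdd: "bounded (Yset f L U T t0 z)" if "0 \<le> t0" "t0 \<le> T" for t0 z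
  proof -
    have "Yset f L U T t0 z \<subseteq> cball 0 (M_L * (T - t0))"
    proof
      fix w assume "w \<in> Yset f L U T t0 z"
      then obtain u y where uy: "u \<in> ?adm" "is_traj f T t0 z u y" "w = cost L t0 T y u"
        unfolding Yset_def by blast
      have "norm (integral {t0..T} (\<lambda>r. L (y r) (u r))) \<le> integral {t0..T} (\<lambda>r. M_L)"
      proof (rule integral_norm_bound_integral)
        show "(\<lambda>r. L (y r) (u r)) integrable_on {t0..T}" using Lint uy that by blast
        show "(\<lambda>r. M_L) integrable_on {t0..T}" by blast
        show "\<And>r. r \<in> {t0..T} \<Longrightarrow> norm (L (y r) (u r)) \<le> M_L"
          using uy(1) that L_bnd unfolding admissible_controls_def by auto
      qed
      also have "\<dots> = M_L * (T - t0)" using that by simp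
      finally show "w \<in> cball 0 (M_L * (T - t0))" using uy by (simp add: cost_def)
    qed
    then show ?thesis using bounded_cball bounded_subset by blast
  qed
  define Yt where "Yt = Yset f L U T t x"
  define Ys where "Ys = (\<lambda>z. Yset f L U T s z)"
  define Yti where "Yti = Ytilde f L U T P \<tau> t x"
  have Yti_eq: "Yti = \<Union> {(\<lambda>v. cost L t s y u + v) ` efficient (closure (Ys (y s))) P | u y.
          u \<in> ?adm \<and> is_traj f T t x u y}"
    unfolding Yti_def Ytilde_def Vfun_def Ys_def s_def by simp
  have split: "\<exists>u y. u \<in> ?adm \<and> is_traj f T t x u y \<and> w - cost L t s y u \<in> Ys (y s)"
    if wYt: "w \<in> Yt" for w
  proof -
    obtain u y where uy: "u \<in> ?adm" "is_traj f T t x u y" "w = cost L t T y u"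
      using wYt unfolding Yt_def Yset_def by blast
    have tr: "is_traj f T s (y s) u y" using traj_restrict[OF uy(2) ts(1,2)] .
    have "cost L t T y u = cost L t s y u + cost L s T y u"
      unfolding cost_def
      using Henstock_Kurzweil_Integration.integral_combine[OF ts(1,2) Lint[OF ts(3) uy(1,2)]] by simp
    then have "w - cost L t s y u = cost L s T y u" using uy by simp
    moreover have "cost L s T y u \<in> Ys (y s)" unfolding Ys_def Yset_def using uy(1) tr by blast
    ultimately have "w - cost L t s y u \<in> Ys (y s)" by simp
    then show ?thesis using uy(1,2) by blast
  qed
  have conc: "cost L t s y u + w \<in> Yt"
    if uy: "u \<in> ?adm" "is_traj f T t x u y" and w: "w \<in> Ys (y s)" for u y w
  proof -
    obtain u' y' where uy': "u' \<in> ?adm" "is_traj f T s (y s) u' y'" "w = cost L s T y' u'"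
      using w unfolding Ys_def Yset_def by blast
    let ?u = "\<lambda>r. if r \<le> s then u r else u' r"
    let ?y = "\<lambda>r. if r \<le> s then y r else y' r"
    have ua: "?u \<in> ?adm" by (rule concat_adm[OF uy(1) uy'(1)])
    have ty: "is_traj f T t x ?u ?y" by (rule concat_traj[OF uy(2) uy'(2) ts(1,2)])
    have gi: "(\<lambda>r. L (?y r) (?u r)) integrable_on {t..T}" using Lint[OF ts(3) ua ty] .
    have "cost L t T ?y ?u = integral {t..s} (\<lambda>r. L (?y r) (?u r)) + integral {s..T} (\<lambda>r. L (?y r) (?u r))"
      unfolding cost_def
      using Henstock_Kurzweil_Integration.integral_combine[OF ts(1,2) gi] by simp
    also have "integral {t..s} (\<lambda>r. L (?y r) (?u r)) = integral {t..s} (\<lambda>r. L (y r) (u r))"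
      by (rule integral_cong) auto
    also have "integral {s..T} (\<lambda>r. L (?y r) (?u r)) = integral {s..T} (\<lambda>r. L (y' r) (u' r))"
      by (rule integral_spike[where S="{s}"]) auto
    finally have "cost L t T ?y ?u = cost L t s y u + w" using uy' by (simp add: cost_def)
    moreover have "cost L t T ?y ?u \<in> Yt" unfolding Yt_def Yset_def using ua ty by blast
    ultimately show ?thesis by simp
  qed
  have bYt: "bounded Yt" unfolding Yt_def proof -
    have tT: "t \<le> T" using ts by linarith
    show "bounded (Yset f L U T t x)" by (rule Ybdd[OF ts(3) tT])
  qed
  have BA: "closure Yti \<subseteq> closure Yt"
  proof -
    have "Yti \<subseteq> closure Yt"
    proof
      fix w assume "w \<in> Yti"
      then obtain u y v where uy: "u \<in> ?adm" "is_traj f T t x u y"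
        and v: "v \<in> efficient (closure (Ys (y s))) P" and w: "w = cost L t s y u + v"
        unfolding Yti_eq by blast
      have vc: "v \<in> closure (Ys (y s))" using v unfolding efficient_def by blast
      have sub: "(+) (cost L t s y u) ` Ys (y s) \<subseteq> Yt" using conc[OF uy] by blast
      have "w \<in> (+) (cost L t s y u) ` closure (Ys (y s))" using vc w by blast
      also have "\<dots> = closure ((+) (cost L t s y u) ` Ys (y s))" by (simp add: closure_translation)
      also have "\<dots> \<subseteq> closure Yt" using sub closure_mono by blast
      finally show "w \<in> closure Yt" .
    qed
    then show ?thesis using closure_minimal closed_closure by blast
  qed
  have "bounded (closure Yt)" using bYt by (rule bounded_closure)
  then have "bounded (closure Yti)" using BA by (rule bounded_subset)
  then have "bounded Yti" by (rule bounded_subset[OF _ closure_subset])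
  then have cB: "compact (closure Yti)" by (simp add: compact_closure)
  define D where "D = (\<Union>p\<in>P. \<Union>b\<in>closure Yti. {p + b})"
  have clD: "closed D" unfolding D_def using closed_compact_sums[OF P_closed cB] .
  have YD: "Yt \<subseteq> D"
  proof
    fix w assume "w \<in> Yt"
    then obtain u y where uy: "u \<in> ?adm" "is_traj f T t x u y" and wY: "w - cost L t s y u \<in> Ys (y s)"
      using split by blast
    have cpt: "compact (closure (Ys (y s)))" unfolding Ys_def
      using Ybdd[OF ts(4,2)] by (simp add: compact_closure)
    obtain m where m: "m \<in> efficient (closure (Ys (y s))) P" "(w - cost L t s y u) - m \<in> P"
      using dominate[OF cpt P_closed add P_pointed P_zero] wY closure_subset by blast
    have "cost L t s y u + m \<in> Yti" unfolding Yti_eq using uy m(1) by blast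
    then have "cost L t s y u + m \<in> closure Yti" using closure_subset by blast
    moreover have "w = ((w - cost L t s y u) - m) + (cost L t s y u + m)" by simp
    ultimately show "w \<in> D" unfolding D_def using m(2) by blast
  qed
  have AD: "closure Yt \<subseteq> D" using YD clD closure_minimal by blast
  have "efficient (closure Yt) P = efficient (closure Yti) P"
  proof (rule eff_eq[OF BA _ add P_pointed P_zero])
    fix a assume "a \<in> closure Yt"
    then have "a \<in> D" using AD by blast
    then obtain p b where pb: "p \<in> P" "b \<in> closure Yti" "a = p + b" unfolding D_def by blast
    then have "a - b \<in> P" by simp
    then show "\<exists>b\<in>closure Yti. a - b \<in> P" using pb(2) by blast
  qed
  then show ?thesis unfolding Vfun_def Yt_def Yti_def .
qed

end
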